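(* Let $\mathcal{F}_A$ and $\mathcal{F}_B$ be scaling functions associated with the sets $A = \{p : \mathcal{F}_A(p,\theta) \le 1\}$ and $B = \{p : \mathcal{F}_B(p,\theta) \le 1\}$, respectively, and fix $\theta$. Consider the problem $\min_{p \in \mathbb{R}^{n_p}} \mathcal{F}_A(p,\theta)$ s.t. $\mathcal{F}_B(p,\theta) \le 1$, with Lagrangian $L(p,\theta,\lambda) = \mathcal{F}_A(p,\theta) + \lambda(\mathcal{F}_B(p,\theta) - 1)$. If $A \cap B = \varnothing$, then any pair of an optimal primal variable $p^\star$ and an optimal dual variable $\lambda^\star$ of this problem satisfies $\mathcal{F}_A(p^\star,\theta) > 1$, $\lambda^\star > 0$, $\frac{\partial \mathcal{F}_B}{\partial p}(p^\star,\theta) \ne 0$, and $\mathcal{F}_B(p^\star,\theta) = 1$.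
   Context: A scaling function (with parameters $\theta \in \mathbb{R}^{n_\theta}$) for a closed set $A \subset \mathbb{R}^{n_p}$ with non-empty interior is a $\mathcal{C}^2$ function $\mathcal{F}_A : \mathbb{R}^{n_p} \times \mathbb{R}^{n_\theta} \to \mathbb{R}$ such that, for each $\theta$, $\mathcal{F}_A(\cdot,\theta)$ is convex, $A = \{p \in \mathbb{R}^{n_p} : \mathcal{F}_A(p,\theta) \le 1\}$, and there exists $p \in A$ with $\mathcal{F}_A(p,\theta) < 1$. An optimal primal variable is a minimizer $p^\star$; an optimal dual variable is a $\lambda^\star \ge 0$ maximizing the dual function $\lambda \mapsto \inf_p L(p,\theta,\lambda)$ over $\lambda \ge 0$. *)

theory Defs
  imports "HOL-Analysis.Analysis"
begin

definition C2 :: "('a::euclidean_space \<Rightarrow> real) \<Rightarrow> bool" where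
  "C2 f \<longleftrightarrow> (\<exists>Df :: 'a \<Rightarrow> ('a \<Rightarrow>\<^sub>L real). \<exists>D2f :: 'a \<Rightarrow> ('a \<Rightarrow>\<^sub>L ('a \<Rightarrow>\<^sub>L real)).
      (\<forall>x. (f has_derivative blinfun_apply (Df x)) (at x)) \<and>
      (\<forall>x. (Df has_derivative blinfun_apply (D2f x)) (at x)) \<and>
      continuous_on UNIV D2f)"

definition scaling_function ::
  "('p::euclidean_space \<Rightarrow> 't::euclidean_space \<Rightarrow> real) \<Rightarrow> 'p set \<Rightarrow> bool" where
  "scaling_function F A \<longleftrightarrow>
     closed A \<and> interior A \<noteq> {} \<and>
     C2 (\<lambda>z. F (fst z) (snd z)) \<and>
     (\<forall>\<theta>. convex_on UNIV (\<lambda>p. F p \<theta>)) \<and>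
     (\<forall>\<theta>. A = {p. F p \<theta> \<le> 1}) \<and>
     (\<forall>\<theta>. \<exists>p\<in>A. F p \<theta> < 1)"

definition lagrangian ::
  "('p \<Rightarrow> 't \<Rightarrow> real) \<Rightarrow> ('p \<Rightarrow> 't \<Rightarrow> real) \<Rightarrow> 'p \<Rightarrow> 't \<Rightarrow> real \<Rightarrow> real" where
  "lagrangian FA FB p \<theta> l = FA p \<theta> + l * (FB p \<theta> - 1)"

text \<open>Dual function (extended-real valued, since the infimum may be -infinity).\<close>
definition dual_fun ::
  "('p \<Rightarrow> 't \<Rightarrow> real) \<Rightarrow> ('p \<Rightarrow> 't \<Rightarrow> real) \<Rightarrow> 't \<Rightarrow> real \<Rightarrow> ereal" where
  "dual_fun FA FB \<theta> l = (INF p. ereal (lagrangian FA FB p \<theta> l))"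

definition optimal_primal ::
  "('p \<Rightarrow> 't \<Rightarrow> real) \<Rightarrow> ('p \<Rightarrow> 't \<Rightarrow> real) \<Rightarrow> 't \<Rightarrow> 'p \<Rightarrow> bool" where
  "optimal_primal FA FB \<theta> ps \<longleftrightarrow>
     FB ps \<theta> \<le> 1 \<and> (\<forall>p. FB p \<theta> \<le> 1 \<longrightarrow> FA ps \<theta> \<le> FA p \<theta>)"

definition optimal_dual ::
  "('p \<Rightarrow> 't \<Rightarrow> real) \<Rightarrow> ('p \<Rightarrow> 't \<Rightarrow> real) \<Rightarrow> 't \<Rightarrow> real \<Rightarrow> bool" where
  "optimal_dual FA FB \<theta> ls \<longleftrightarrow>
     ls \<ge> 0 \<and> (\<forall>l\<ge>0. dual_fun FA FB \<theta> l \<le> dual_fun FA FB \<theta> ls)"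

end

theory Submission
  imports Defs
begin

lemma line_deriv:
  fixes f :: "'a::real_normed_vector \<Rightarrow> real"
  assumes d: "(f has_derivative D) (at x)"
  shows "((\<lambda>t. f (x + t *\<^sub>R v)) has_field_derivative D v) (at 0)"
proof -
  have h: "((\<lambda>t::real. x + t *\<^sub>R v) has_derivative (\<lambda>t. t *\<^sub>R v)) (at 0)"
    by (auto intro!: derivative_eq_intros)
  have "((\<lambda>t. f (x + t *\<^sub>R v)) has_derivative (\<lambda>t. D (t *\<^sub>R v))) (at 0)"
    using has_derivative_compose[OF h] d by simp
  moreover have "(\<lambda>t. D (t *\<^sub>R v)) = (\<lambda>t. D v * t)"
    using has_derivative_linear[OF d] by (auto simp: linear_cmul)
  ultimately have "((\<lambda>t. f (x + t *\<^sub>R v)) has_derivative (\<lambda>t. D v * t)) (at 0)" by simp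
  thus ?thesis unfolding has_field_derivative_def by simp
qed

lemma tangent:
  fixes f :: "'a::real_normed_vector \<Rightarrow> real"
  assumes cvx: "convex_on UNIV f" and d: "(f has_derivative D) (at x)"
  shows "f y \<ge> f x + D (y - x)"
proof -
  let ?g = "\<lambda>t::real. f (x + t *\<^sub>R (y - x))"
  have gc: "convex_on UNIV ?g"
  proof (rule convex_onI)
    fix u s t :: real assume "u > 0" "u < 1"
    have "x + ((1 - u) *\<^sub>R s + u *\<^sub>R t) *\<^sub>R (y - x)
        = (1 - u) *\<^sub>R (x + s *\<^sub>R (y - x)) + u *\<^sub>R (x + t *\<^sub>R (y - x))"
      by (simp add: algebra_simps)
    then show "?g ((1 - u) *\<^sub>R s + u *\<^sub>R t) \<le> (1 - u) * ?g s + u * ?g t"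
      using convex_onD[OF cvx, of u "x + s *\<^sub>R (y - x)" "x + t *\<^sub>R (y - x)"] \<open>u > 0\<close> \<open>u < 1\<close>
      by simp
  qed simp
  have gd: "(?g has_field_derivative D (y - x)) (at 0 within UNIV)"
    using line_deriv[OF d] by simp
  have "?g 1 - ?g 0 \<ge> D (y - x) * (1 - 0)"
    by (rule convex_on_imp_above_tangent[OF gc _ _ _ gd]) auto
  then show ?thesis by simp
qed

lemma partial_deriv:
  assumes "scaling_function F A"
  shows "\<exists>D. ((\<lambda>p. F p \<theta>) has_derivative D) (at p)"
proof -
  from assms obtain Df where Df: "\<And>z. ((\<lambda>z. F (fst z) (snd z)) has_derivative blinfun_apply (Df z)) (at z)"
    unfolding scaling_function_def C2_def by blast
  have h: "((\<lambda>p. (p, \<theta>)) has_derivative (\<lambda>p. (p, 0))) (at p)"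
    by (auto intro!: derivative_eq_intros)
  show ?thesis
    using has_derivative_compose[OF h Df] by auto
qed

theorem lemma2:
  fixes FA FB :: "'p::euclidean_space \<Rightarrow> 't::euclidean_space \<Rightarrow> real"
    and A B :: "'p set" and \<theta> :: 't and ps :: 'p and ls :: real
  assumes "scaling_function FA A"
    and "scaling_function FB B"
    and "A \<inter> B = {}"
    and "optimal_primal FA FB \<theta> ps"
    and "optimal_dual FA FB \<theta> ls"
  shows "FA ps \<theta> > 1 \<and> ls > 0 \<and>
         frechet_derivative (\<lambda>p. FB p \<theta>) (at ps) \<noteq> (\<lambda>_. 0) \<and>
         FB ps \<theta> = 1"
proof -
  define fa where "fa = (\<lambda>p. FA p \<theta>)"
  define fb where "fb = (\<lambda>p. FB p \<theta>)"
  have cA: "convex_on UNIV fa" and cB: "convex_on UNIV fb"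
    using assms(1,2) unfolding scaling_function_def fa_def fb_def by auto
  have Aeq: "A = {p. fa p \<le> 1}" and Beq: "B = {p. fb p \<le> 1}"
    using assms(1,2) unfolding scaling_function_def fa_def fb_def by auto
  obtain pA where pA: "fa pA < 1"
    using assms(1) unfolding scaling_function_def fa_def by blast
  obtain pB where pB: "fb pB < 1"
    using assms(2) unfolding scaling_function_def fb_def by blast
  have ps1: "fb ps \<le> 1" and opt: "\<And>p. fb p \<le> 1 \<Longrightarrow> fa ps \<le> fa p"
    using assms(4) unfolding optimal_primal_def fa_def fb_def by auto
  obtain DA where DA: "(fa has_derivative DA) (at ps)"
    using partial_deriv[OF assms(1)] unfolding fa_def by blast
  obtain DB where DB: "(fb has_derivative DB) (at ps)"
    using partial_deriv[OF assms(2)] unfolding fb_def by blast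
  have linA: "linear DA" and linB: "linear DB"
    using DA DB has_derivative_linear by auto
  have disj: "\<And>p. fa p \<le> 1 \<Longrightarrow> fb p > 1"
    using assms(3) Aeq Beq by force
  have faps: "fa ps > 1"
    using assms(3) Aeq Beq ps1 by force
  have fbps: "fb ps = 1"
  proof (rule ccontr)
    assume "fb ps \<noteq> 1"
    hence lt: "fb ps < 1" using ps1 by simp
    have gt: "fb pA > 1" using disj pA by simp
    define t where "t = (1 - fb ps) / (fb pA - fb ps)"
    have t0: "t > 0" and t1: "t < 1" using lt gt unfolding t_def by (auto simp: field_simps)
    define q where "q = (1 - t) *\<^sub>R ps + t *\<^sub>R pA"
    have "fb q \<le> (1 - t) * fb ps + t * fb pA"
      unfolding q_def using convex_onD[OF cB, of t ps pA] t0 t1 by simp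
    also have "\<dots> = fb ps + t * (fb pA - fb ps)" by (simp add: algebra_simps)
    also have "\<dots> = 1" unfolding t_def using lt gt by (simp add: field_simps)
    finally have "fa ps \<le> fa q" by (rule opt)
    also have "fa q \<le> (1 - t) * fa ps + t * fa pA"
      unfolding q_def using convex_onD[OF cA, of t ps pA] t0 t1 by simp
    also have "\<dots> < fa ps"
    proof -
      have "t * fa pA < t * fa ps" using t0 pA faps by simp
      thus ?thesis by (simp add: algebra_simps)
    qed
    finally show False by simp
  qed
  have fd: "frechet_derivative fb (at ps) = DB"
    using frechet_derivative_at[OF DB] by simp
  have DBnz: "DB \<noteq> (\<lambda>_. 0)"
  proof
    assume "DB = (\<lambda>_. 0)"
    hence "fb pB \<ge> fb ps" using tangent[OF cB DB, of pB] by simp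
    thus False using pB fbps by simp
  qed
  have descent: "DA d \<ge> 0" if "DB d < 0" for d
  proof (rule ccontr)
    assume "\<not> DA d \<ge> 0"
    hence "DA d < 0" by simp
    from DERIV_neg_dec_right[OF line_deriv[OF DA, of d] this]
    obtain da where da: "da > 0" "\<And>h. h > 0 \<Longrightarrow> h < da \<Longrightarrow> fa (ps + h *\<^sub>R d) < fa ps"
      by auto
    from DERIV_neg_dec_right[OF line_deriv[OF DB, of d] that]
    obtain db where db: "db > 0" "\<And>h. h > 0 \<Longrightarrow> h < db \<Longrightarrow> fb (ps + h *\<^sub>R d) < fb ps"
      by auto
    define h where "h = min da db / 2"
    have "h > 0" "h < da" "h < db" using da db unfolding h_def by auto
    hence "fa (ps + h *\<^sub>R d) < fa ps" "fb (ps + h *\<^sub>R d) < 1"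
      using da db fbps by auto
    thus False using opt[of "ps + h *\<^sub>R d"] by simp
  qed
  obtain v where v: "DB v \<noteq> 0" using DBnz by auto
  define e where "e = (1 / DB v) *\<^sub>R v"
  have e: "DB e = 1" unfolding e_def using v linear_cmul[OF linB] by simp
  have DAe: "DA e \<le> 0"
    using descent[of "- e"] e linear_neg[OF linA] linear_neg[OF linB] by simp
  have perp: "DA w = 0" if w: "DB w = 0" for w
  proof (rule ccontr)
    assume nz: "DA w \<noteq> 0"
    define eps where "eps = \<bar>DA w\<bar> / (1 - DA e)"
    have eps0: "eps > 0" unfolding eps_def using nz DAe by auto
    have "DB (w - eps *\<^sub>R e) < 0"
      using linear_diff[OF linB] linear_cmul[OF linB] w e eps0 by simp
    hence "DA (w - eps *\<^sub>R e) \<ge> 0" by (rule descent)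
    hence a1: "DA w - eps * DA e \<ge> 0"
      using linear_diff[OF linA] linear_cmul[OF linA] by simp
    have "DB (- w - eps *\<^sub>R e) < 0"
      using linear_diff[OF linB] linear_cmul[OF linB] linear_neg[OF linB] w e eps0 by simp
    hence "DA (- w - eps *\<^sub>R e) \<ge> 0" by (rule descent)
    hence a2: "- DA w - eps * DA e \<ge> 0"
      using linear_diff[OF linA] linear_cmul[OF linA] linear_neg[OF linA] by simp
    have "\<bar>DA w\<bar> \<le> eps * (- DA e)" using a1 a2 by linarith
    moreover have "eps * (- DA e) < eps * (1 - DA e)" using eps0 by (simp add: algebra_simps)
    moreover have "eps * (1 - DA e) = \<bar>DA w\<bar>" unfolding eps_def using DAe by simp
    ultimately show False by simp
  qed
  define mu where "mu = - DA e"
  have mu0: "mu \<ge> 0" unfolding mu_def using DAe by simp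
  have comb: "DA u + mu * DB u = 0" for u
  proof -
    have "DB (u - DB u *\<^sub>R e) = 0"
      using linear_diff[OF linB] linear_cmul[OF linB] e by simp
    hence "DA (u - DB u *\<^sub>R e) = 0" by (rule perp)
    hence "DA u = DB u * DA e"
      using linear_diff[OF linA] linear_cmul[OF linA] by simp
    thus ?thesis unfolding mu_def by simp
  qed
  have lag: "lagrangian FA FB p \<theta> mu \<ge> fa ps" for p
  proof -
    have a: "fa p \<ge> fa ps + DA (p - ps)" by (rule tangent[OF cA DA])
    have b: "fb p \<ge> 1 + DB (p - ps)" using tangent[OF cB DB, of p] fbps by simp
    have "mu * (fb p - 1) \<ge> mu * DB (p - ps)"
      using b mu0 by (intro mult_left_mono) auto
    thus ?thesis using a comb[of "p - ps"] unfolding lagrangian_def fa_def fb_def by simp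
  qed
  have dmu: "dual_fun FA FB \<theta> mu \<ge> ereal (fa ps)"
    unfolding dual_fun_def by (rule INF_greatest) (use lag in simp)
  have d0: "dual_fun FA FB \<theta> 0 \<le> ereal (fa pA)"
    unfolding dual_fun_def
    by (rule INF_lower2[of pA]) (auto simp: lagrangian_def fa_def)
  have ls0: "ls \<ge> 0" and lsopt: "dual_fun FA FB \<theta> mu \<le> dual_fun FA FB \<theta> ls"
    using assms(5) mu0 unfolding optimal_dual_def by auto
  have lspos: "ls > 0"
  proof (rule ccontr)
    assume "\<not> ls > 0"
    hence "ls = 0" using ls0 by simp
    hence "ereal (fa ps) \<le> ereal (fa pA)" using dmu lsopt d0 by (metis order_trans)
    thus False using pA faps by simp
  qed
  show ?thesis
    using faps lspos DBnz fd fbps unfolding fa_def fb_def by simp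
qed

end
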